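(* Let $X\in\mathbb{R}^{m\times n}$, $\lambda>0$, and let $f:\mathbb{R}^{m\times n}\to\mathbb{R}$ be an arbitrary function. Consider the original R-PCA problem $$\min_{A,E\in\mathbb{R}^{m\times n}} \operatorname{rank}(A)+\lambda f(E)\quad\text{s.t.}\quad X=A+E, \tag{P}$$ and the relaxed R-LRR problem $$\min_{Z\in\mathbb{R}^{n\times n},\,E\in\mathbb{R}^{m\times n}} \|Z\|_*+\lambda f(E)\quad\text{s.t.}\quad X-E=(X-E)Z. \tag{R}$$ (i) If $(A^*,E^* )$ is any minimizer of (P), then $\big((A^* )^\dagger A^*,\,E^*\big)$ is an optimal solution of (R). (ii) Conversely, if $(Z^*,E^* )$ is a minimizer of (R), then $(X-E^*,E^* )$ is an optimal solution of (P).
   Context: $M^\dagger$ denotes the Moore–Penrose pseudo-inverse of $M$, and $\|\cdot\|_*$ denotes the nuclear norm (sum of singular values). *)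

theory Defs
  imports "HOL-Analysis.Analysis"
begin

text \<open>Real matrices: an m x n matrix is an element of real^'n^'m (rows indexed by 'm).\<close>

text \<open>Moore-Penrose pseudo-inverse, via the four Penrose conditions (unique solution).\<close>
definition pinv :: "real^'n^'m \<Rightarrow> real^'m^'n" where
  "pinv A = (THE B. A ** B ** A = A \<and> B ** A ** B = B \<and>
                    transpose (A ** B) = A ** B \<and> transpose (B ** A) = B ** A)"

definition is_diagonal :: "real^'n^'n \<Rightarrow> bool" where
  "is_diagonal D \<longleftrightarrow> (\<forall>i j. i \<noteq> j \<longrightarrow> D $ i $ j = 0)"

text \<open>Nuclear norm = sum of the singular values (with multiplicity); the singular values of A
  are the square roots of the eigenvalues of A^T A, read off an orthogonal diagonalisation
  A^T A = V D V^T.\<close>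
definition nuclear_norm :: "real^'n^'m \<Rightarrow> real" where
  "nuclear_norm A = (THE s. \<exists>V D. orthogonal_matrix V \<and> is_diagonal D \<and>
       transpose A ** A = V ** D ** transpose V \<and> s = (\<Sum>i\<in>UNIV. sqrt (D $ i $ i)))"

definition rpca_opt :: "real^'n^'m \<Rightarrow> real \<Rightarrow> (real^'n^'m \<Rightarrow> real) \<Rightarrow>
    real^'n^'m \<Rightarrow> real^'n^'m \<Rightarrow> bool" where
  "rpca_opt X lam f A E \<longleftrightarrow> X = A + E \<and>
     (\<forall>A' E'. X = A' + E' \<longrightarrow> real (rank A) + lam * f E \<le> real (rank A') + lam * f E')"

definition rlrr_opt :: "real^'n^'m \<Rightarrow> real \<Rightarrow> (real^'n^'m \<Rightarrow> real) \<Rightarrow>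
    real^'n^'n \<Rightarrow> real^'n^'m \<Rightarrow> bool" where
  "rlrr_opt X lam f Z E \<longleftrightarrow> X - E = (X - E) ** Z \<and>
     (\<forall>Z' E'. X - E' = (X - E') ** Z' \<longrightarrow> nuclear_norm Z + lam * f E \<le> nuclear_norm Z' + lam * f E')"

end

theory Submission
  imports Defs
begin

lemma sym_inner:
  fixes S :: "real^'n^'n"
  assumes "transpose S = S"
  shows "x \<bullet> (S *v y) = (S *v x) \<bullet> y"
  by (metis assms dot_lmul_matrix transpose_matrix_vector)

lemma eig_exists:
  fixes S :: "real^'n^'n"
  assumes sym: "transpose S = S" and sub: "subspace U" and ne: "U \<noteq> {0}"
    and inv: "\<forall>x\<in>U. S *v x \<in> U"
  shows "\<exists>x\<in>U. norm x = 1 \<and> (\<exists>c. S *v x = c *\<^sub>R x)"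
proof -
  define K where "K = U \<inter> sphere 0 1"
  have cK: "compact K" unfolding K_def
    by (intro closed_Int_compact closed_subspace sub compact_sphere)
  obtain u where u: "u \<in> U" "u \<noteq> 0" using ne sub subspace_0 by blast
  then have "u /\<^sub>R norm u \<in> K" unfolding K_def
    using sub by (simp add: subspace_scale)
  then have neK: "K \<noteq> {}" by blast
  have cont: "continuous_on K (\<lambda>x. x \<bullet> (S *v x))"
    by (simp add: continuous_on_inner continuous_on_id linear_continuous_on matrix_vector_mul_bounded_linear)
  obtain x where xK: "x \<in> K" and xmax: "\<forall>y\<in>K. y \<bullet> (S *v y) \<le> x \<bullet> (S *v x)"
    using continuous_attains_sup[OF cK neK cont] by blast
  define M where "M = x \<bullet> (S *v x)"
  have xU: "x \<in> U" and nx: "norm x = 1" using xK by (auto simp: K_def)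
  have xx: "x \<bullet> x = 1" using nx by (simp add: norm_eq_1)
  define g where "g v = v \<bullet> (M *\<^sub>R v - S *v v)" for v
  have gnn: "g v \<ge> 0" if "v \<in> U" for v
  proof (cases "v = 0")
    case True then show ?thesis by (simp add: g_def)
  next
    case False
    let ?w = "v /\<^sub>R norm v"
    have "?w \<in> K" using that False sub by (simp add: K_def subspace_scale)
    then have "?w \<bullet> (S *v ?w) \<le> M" using xmax M_def by blast
    moreover have "?w \<bullet> (S *v ?w) = (v \<bullet> (S *v v)) / (norm v)^2"
      by (simp add: matrix_vector_mult_scaleR power2_eq_square field_simps)
    ultimately have "(v \<bullet> (S *v v)) / (norm v)^2 \<le> M" by simp
    then have "v \<bullet> (S *v v) \<le> M * (norm v)^2"
      using False by (simp add: divide_le_eq)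
    then show ?thesis
      by (simp add: g_def inner_diff_right power2_norm_eq_inner)
  qed
  have gx: "g x = 0" by (simp add: g_def inner_diff_right xx M_def)
  have orth: "y \<bullet> (M *\<^sub>R x - S *v x) = 0" if yU: "y \<in> U" for y
  proof -
    define a where "a = y \<bullet> (M *\<^sub>R x - S *v x)"
    define b where "b = g y"
    have b0: "b \<ge> 0" using gnn yU b_def by simp
    have exp: "g (x + t *\<^sub>R y) = g x + 2 * t * a + t^2 * b" for t
    proof -
      have s: "x \<bullet> (S *v y) = y \<bullet> (S *v x)"
        using sym_inner[OF sym, of x y] by (simp add: inner_commute)
      have "S *v (x + t *\<^sub>R y) = S *v x + t *\<^sub>R (S *v y)"
        by (simp add: matrix_vector_right_distrib matrix_vector_mult_scaleR)
      then show ?thesis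
        unfolding g_def a_def b_def
        apply (simp only: inner_add_left inner_add_right inner_diff_right inner_scaleR_left inner_scaleR_right)
        using s by (simp add: inner_commute[of y x] power2_eq_square algebra_simps)
    qed
    define t where "t = - a / (b + 1)"
    have "x + t *\<^sub>R y \<in> U" using xU yU sub by (simp add: subspace_add subspace_scale)
    then have "0 \<le> 2 * t * a + t^2 * b" using gnn exp gx by force
    also have "2 * t * a + t^2 * b = a^2 * (- b - 2) / (b+1)^2"
    proof -
      have h: "b + 1 \<noteq> 0" using b0 by simp
      show ?thesis unfolding t_def using h by (simp add: divide_simps power2_eq_square) (simp add: algebra_simps)
    qed
    finally have "0 \<le> a^2 * (- b - 2) / (b+1)^2" .
    then have "a^2 * (- b - 2) \<ge> 0" using b0
      by (simp add: zero_le_divide_iff)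
    then have "a^2 * (b + 2) \<le> 0" by (simp add: algebra_simps)
    then have "a^2 \<le> 0" using b0 by (simp add: mult_le_0_iff)
    then show ?thesis unfolding a_def by simp
  qed
  have "M *\<^sub>R x - S *v x \<in> U" using xU inv sub by (simp add: subspace_diff subspace_scale)
  then have "(M *\<^sub>R x - S *v x) \<bullet> (M *\<^sub>R x - S *v x) = 0" using orth by blast
  then have "S *v x = M *\<^sub>R x" by simp
  then show ?thesis using xU nx by blast
qed

lemma eig_basis:
  fixes S :: "real^'n^'n"
  assumes sym: "transpose S = S"
  shows "subspace U \<Longrightarrow> (\<forall>x\<in>U. S *v x \<in> U) \<Longrightarrow>
    \<exists>B. B \<subseteq> U \<and> span B = U \<and> pairwise orthogonal B \<and> (\<forall>b\<in>B. norm b = 1 \<and> (\<exists>c. S *v b = c *\<^sub>R b))"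
proof (induction "dim U" arbitrary: U rule: less_induct)
  case (less U)
  show ?case
  proof (cases "U = {0}")
    case True
    then show ?thesis by (intro exI[of _ "{}"]) auto
  next
    case False
    obtain x c where xU: "x \<in> U" and nx: "norm x = 1" and ev: "S *v x = c *\<^sub>R x"
      using eig_exists[OF sym less.prems(1) False less.prems(2)] by blast
    define U' where "U' = U \<inter> {y. x \<bullet> y = 0}"
    have subU': "subspace U'" unfolding U'_def
      by (intro subspace_inter less.prems(1) subspace_hyperplane)
    have invU': "\<forall>y\<in>U'. S *v y \<in> U'"
    proof
      fix y assume y: "y \<in> U'"
      have "x \<bullet> (S *v y) = (S *v x) \<bullet> y" by (rule sym_inner[OF sym])
      also have "\<dots> = 0" using y ev by (simp add: U'_def)
      finally show "S *v y \<in> U'" using y less.prems(2) by (simp add: U'_def)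
    qed
    have xx: "x \<bullet> x = 1" using nx by (simp add: norm_eq_1)
    have "x \<notin> U'" using xx by (simp add: U'_def)
    then have "U' \<subset> U" using xU unfolding U'_def by blast
    then have "span U' \<subset> span U" using subU' less.prems(1) by (metis span_eq_iff)
    then have "dim U' < dim U" by (rule dim_psubset)
    then obtain B' where B': "B' \<subseteq> U'" "span B' = U'" "pairwise orthogonal B'"
        "\<forall>b\<in>B'. norm b = 1 \<and> (\<exists>c. S *v b = c *\<^sub>R b)"
      using less.hyps subU' invU' by blast
    define B where "B = insert x B'"
    have "B \<subseteq> U" using B'(1) xU by (auto simp: B_def U'_def)
    moreover have "pairwise orthogonal B"
      using B'(1,3) unfolding B_def
      by (auto simp: pairwise_insert U'_def orthogonal_def inner_commute)
    moreover have "span B = U"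
    proof
      show "span B \<subseteq> U" using \<open>B \<subseteq> U\<close> less.prems(1) by (simp add: span_minimal)
      show "U \<subseteq> span B"
      proof
        fix u assume u: "u \<in> U"
        have "u - (x \<bullet> u) *\<^sub>R x \<in> U'"
          using u xU less.prems(1) xx by (simp add: U'_def subspace_diff subspace_scale inner_diff_right)
        then have "u - (x \<bullet> u) *\<^sub>R x \<in> span B" using B'(2) span_mono[of B' B]
          by (auto simp: B_def)
        moreover have "(x \<bullet> u) *\<^sub>R x \<in> span B" by (simp add: B_def span_base span_scale)
        ultimately have "(u - (x \<bullet> u) *\<^sub>R x) + (x \<bullet> u) *\<^sub>R x \<in> span B" by (rule span_add)
        then show "u \<in> span B" by simp
      qed
    qed
    moreover have "\<forall>b\<in>B. norm b = 1 \<and> (\<exists>c. S *v b = c *\<^sub>R b)"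
      using B'(4) nx ev by (auto simp: B_def)
    ultimately show ?thesis by blast
  qed
qed

lemma spectral:
  fixes S :: "real^'n^'n"
  assumes sym: "transpose S = S"
  shows "\<exists>V D. orthogonal_matrix V \<and> is_diagonal D \<and> S = V ** D ** transpose V"
proof -
  obtain B where B: "span B = UNIV" "pairwise orthogonal B"
     "\<forall>b\<in>B. norm b = 1 \<and> (\<exists>c. S *v b = c *\<^sub>R b)"
    using eig_basis[OF sym, of UNIV] by auto
  have "0 \<notin> B" using B(3) by force
  then have ind: "independent B" using B(2) pairwise_orthogonal_independent by blast
  then have finB: "finite B" using finiteI_independent by blast
  have "card B = dim (span B)" using dim_span_eq_card_independent[OF ind] by simp
  also have "\<dots> = CARD('n)" using B(1) by simp
  finally have cB: "card (UNIV::'n set) = card B" by simp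
  obtain g where g: "bij_betw g (UNIV::'n set) B"
    using finite_same_card_bij[OF finite_class.finite_UNIV finB cB] by blast
  define ev where "ev b = (SOME c. S *v b = c *\<^sub>R b)" for b
  have gB: "g j \<in> B" for j using g by (auto simp: bij_betw_def)
  have evg: "S *v g j = ev (g j) *\<^sub>R g j" for j
    unfolding ev_def using B(3) gB[of j] by (metis (mono_tags, lifting) someI_ex)
  define V :: "real^'n^'n" where "V = (\<chi> i j. g j $ i)"
  have colV: "column j V = g j" for j by (simp add: V_def column_def vec_eq_iff)
  have oV: "orthogonal_matrix V"
    unfolding orthogonal_matrix_orthonormal_columns colV
  proof (intro conjI allI impI)
    fix i show "norm (g i) = 1" using B(3) gB by blast
  next
    fix i j :: 'n assume "i \<noteq> j"
    then have "g i \<noteq> g j" using g by (auto simp: bij_betw_def inj_on_def)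
    then show "orthogonal (g i) (g j)" using B(2) gB by (auto simp: pairwise_def)
  qed
  define D :: "real^'n^'n" where "D = (\<chi> i j. if i = j then ev (g i) else 0)"
  have dD: "is_diagonal D" by (simp add: is_diagonal_def D_def)
  have SV: "S ** V = V ** D"
  proof -
    have "(S ** V) $ i $ j = (V ** D) $ i $ j" for i j
    proof -
      have "(S ** V) $ i $ j = (S *v g j) $ i"
        by (simp add: matrix_matrix_mult_def matrix_vector_mult_def V_def)
      also have "\<dots> = ev (g j) * g j $ i" by (simp add: evg)
      also have "\<dots> = (V ** D) $ i $ j"
        by (simp add: matrix_matrix_mult_def V_def D_def if_distrib cong: if_cong)
      finally show ?thesis .
    qed
    then show ?thesis by (simp add: vec_eq_iff)
  qed
  have "S = S ** (V ** transpose V)" using oV by (simp add: orthogonal_matrix_def)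
  also have "\<dots> = V ** D ** transpose V" by (simp add: matrix_mul_assoc SV)
  finally show ?thesis using oV dD by blast
qed

lemma mm_diff_l: "(A::real^'n^'m) ** (B - C) = A ** B - A ** C"
  by (simp add: matrix_matrix_mult_def vec_eq_iff sum_subtractf algebra_simps)
lemma mm_diff_r: "((A::real^'n^'m) - B) ** C = A ** C - B ** C"
  by (simp add: matrix_matrix_mult_def vec_eq_iff sum_subtractf algebra_simps)
lemma mm_add_r: "((A::real^'n^'m) + B) ** C = A ** C + B ** C"
  by (simp add: matrix_matrix_mult_def vec_eq_iff sum.distrib algebra_simps)
lemma scale_mm_r: "(A::real^'n^'m) ** (c *\<^sub>R B) = c *\<^sub>R (A ** B)"
  by (simp add: matrix_matrix_mult_def vec_eq_iff sum_distrib_left algebra_simps)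
lemma mat_scale: "(mat c :: real^'n^'n) = c *\<^sub>R mat 1"
  by (simp add: mat_def vec_eq_iff)
lemma mat_mul_l: "mat c ** (A::real^'n^'m) = c *\<^sub>R A"
  by (metis mat_scale scalar_matrix_assoc matrix_mul_lid)
lemma mat_mul_r: "(A::real^'n^'m) ** mat c = c *\<^sub>R A"
  by (metis mat_scale scale_mm_r matrix_mul_rid)
lemma transpose_diff: "transpose ((A::real^'n^'m) - B) = transpose A - transpose B"
  by (simp add: transpose_def vec_eq_iff)

lemma diag_mult:
  fixes D :: "real^'n^'n"
  assumes "is_diagonal D"
  shows "D *v x = (\<chi> i. D$i$i * x$i)"
proof -
  have "(\<Sum>j\<in>UNIV. D$i$j * x$j) = D$i$i * x$i" for i
  proof -
    have "(\<Sum>j\<in>UNIV. D$i$j * x$j) = (\<Sum>j\<in>UNIV. if i = j then D$i$i * x$i else 0)"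
      using assms by (intro sum.cong) (auto simp: is_diagonal_def)
    also have "\<dots> = D$i$i * x$i" by simp
    finally show ?thesis .
  qed
  then show ?thesis by (simp add: matrix_vector_mult_def vec_eq_iff)
qed

lemma rank_diag:
  fixes D :: "real^'n^'n"
  assumes "is_diagonal D"
  shows "rank D = card {i. D$i$i \<noteq> 0}"
proof -
  let ?J = "{i. D$i$i \<noteq> 0}"
  have "range (\<lambda>x. D *v x) = {x::real^'n. \<forall>i. i \<notin> ?J \<longrightarrow> x$i = 0}"
  proof
    show "range (\<lambda>x. D *v x) \<subseteq> {x::real^'n. \<forall>i. i \<notin> ?J \<longrightarrow> x$i = 0}"
      using assms by (auto simp: diag_mult)
    show "{x::real^'n. \<forall>i. i \<notin> ?J \<longrightarrow> x$i = 0} \<subseteq> range (\<lambda>x. D *v x)"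
    proof
      fix x :: "real^'n" assume x: "x \<in> {x::real^'n. \<forall>i. i \<notin> ?J \<longrightarrow> x$i = 0}"
      have "D *v (\<chi> i. x$i / D$i$i) = x"
        using x assms by (auto simp: diag_mult vec_eq_iff)
      then show "x \<in> range (\<lambda>x. D *v x)" by (metis rangeI)
    qed
  qed
  then have "rank D = dim {x::real^'n. \<forall>i. i \<notin> ?J \<longrightarrow> x$i = 0}"
    by (simp add: rank_dim_range)
  also have "\<dots> = vec.dim {x::real^'n. \<forall>i. i \<notin> ?J \<longrightarrow> x$i = 0}"
    by (rule dim_vec_eq[symmetric])
  also have "\<dots> = card ?J" by (rule dim_substandard_cart)
  finally show ?thesis .
qed

lemma rank_orth:
  assumes "orthogonal_matrix V"
  shows "rank (V ** X ** transpose V) = rank (X::real^'n^'n)"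
proof (rule antisym)
  show "rank (V ** X ** transpose V) \<le> rank X"
    by (metis matrix_mul_assoc order_trans rank_mul_le_left rank_mul_le_right)
  have "transpose V ** (V ** X ** transpose V) ** V = (transpose V ** V) ** X ** (transpose V ** V)"
    by (simp add: matrix_mul_assoc)
  then have "X = transpose V ** (V ** X ** transpose V) ** V"
    using assms by (simp add: orthogonal_matrix_def)
  then show "rank X \<le> rank (V ** X ** transpose V)"
    by (metis matrix_mul_assoc order_trans rank_mul_le_left rank_mul_le_right)
qed

lemma count_eq:
  assumes oV: "orthogonal_matrix V" and dD: "is_diagonal D" and M: "M = V ** D ** transpose V"
  shows "rank (M - mat c) = card {i. D$i$i \<noteq> c}"
proof -
  have "V ** (D - mat c) ** transpose V = V ** D ** transpose V - (V ** mat c) ** transpose V"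
    by (simp only: mm_diff_l mm_diff_r)
  also have "(V ** mat c) ** transpose V = c *\<^sub>R (V ** transpose V)"
    by (simp only: mat_mul_r scalar_matrix_assoc)
  also have "\<dots> = mat c" using oV
    unfolding orthogonal_matrix_def by (metis mat_scale)
  finally have "V ** (D - mat c) ** transpose V = M - mat c" by (simp add: M)
  then have "rank (M - mat c) = rank (D - mat c)" using rank_orth[OF oV] by metis
  also have "\<dots> = card {i. (D - mat c)$i$i \<noteq> 0}"
    by (rule rank_diag) (use dD in \<open>simp add: is_diagonal_def mat_def\<close>)
  also have "{i. (D - mat c)$i$i \<noteq> 0} = {i. D$i$i \<noteq> c}" by (simp add: mat_def)
  finally show ?thesis .
qed

lemma sum_diag_eq:
  fixes M :: "real^'n^'n"
  assumes oV: "orthogonal_matrix V" and dD: "is_diagonal D" and M: "M = V ** D ** transpose V"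
  shows "(\<Sum>i\<in>UNIV. h (D$i$i)) =
    (\<Sum>c\<in>{c. rank (M - mat c) < CARD('n)}. h c * real (CARD('n) - rank (M - mat c)))"
proof -
  have ce: "rank (M - mat c) = card {i. D$i$i \<noteq> c}" for c by (rule count_eq[OF oV dD M])
  have vals: "{c. rank (M - mat c) < CARD('n)} = (\<lambda>i. D$i$i) ` UNIV"
  proof -
    have "card {i. D$i$i \<noteq> c} < CARD('n) \<longleftrightarrow> (\<exists>i. D$i$i = c)" for c
    proof
      assume "card {i. D$i$i \<noteq> c} < CARD('n)"
      then have "{i. D$i$i \<noteq> c} \<noteq> UNIV" by auto
      then show "\<exists>i. D$i$i = c" by auto
    next
      assume "\<exists>i. D$i$i = c"
      then have "{i. D$i$i \<noteq> c} \<subset> UNIV" by auto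
      then show "card {i. D$i$i \<noteq> c} < CARD('n)" by (simp add: psubset_card_mono)
    qed
    then show ?thesis by (auto simp: ce)
  qed
  have cnt: "CARD('n) - rank (M - mat c) = card {i. D$i$i = c}" for c
  proof -
    have "{i. D$i$i = c} = UNIV - {i. D$i$i \<noteq> c}" by auto
    then have "card {i. D$i$i = c} = CARD('n) - card {i. D$i$i \<noteq> c}"
      by (simp add: card_Diff_subset)
    then show ?thesis by (simp add: ce)
  qed
  have "(\<Sum>i\<in>UNIV. h (D$i$i)) = (\<Sum>c\<in>(\<lambda>i. D$i$i) ` UNIV. \<Sum>i\<in>{x\<in>UNIV. D$x$x = c}. h (D$i$i))"
    by (rule sum.image_gen) simp
  also have "\<dots> = (\<Sum>c\<in>(\<lambda>i. D$i$i) ` UNIV. h c * real (card {i. D$i$i = c}))"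
    by (intro sum.cong refl) simp
  also have "\<dots> = (\<Sum>c\<in>{c. rank (M - mat c) < CARD('n)}. h c * real (CARD('n) - rank (M - mat c)))"
    unfolding vals by (intro sum.cong refl) (simp only: cnt)
  finally show ?thesis .
qed

lemma nn_eq:
  fixes A :: "real^'n^'m"
  assumes oV: "orthogonal_matrix V" and dD: "is_diagonal D"
    and M: "transpose A ** A = V ** D ** transpose V"
  shows "nuclear_norm A = (\<Sum>i\<in>UNIV. sqrt (D$i$i))"
proof -
  let ?P = "\<lambda>s. \<exists>V' D'. orthogonal_matrix V' \<and> is_diagonal D' \<and>
       transpose A ** A = V' ** D' ** transpose V' \<and> s = (\<Sum>i\<in>UNIV. sqrt (D' $ i $ i))"
  have P0: "?P (\<Sum>i\<in>UNIV. sqrt (D$i$i))" using assms by blast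
  have uniq: "s = (\<Sum>i\<in>UNIV. sqrt (D$i$i))" if "?P s" for s
  proof -
    obtain V' D' where o': "orthogonal_matrix V'" and d': "is_diagonal D'"
      and m': "transpose A ** A = V' ** D' ** transpose V'" and s: "s = (\<Sum>i\<in>UNIV. sqrt (D' $ i $ i))"
      using \<open>?P s\<close> by blast
    note e1 = sum_diag_eq[OF oV dD M, of sqrt]
    note e2 = sum_diag_eq[OF o' d' m', of sqrt]
    show ?thesis unfolding s e1 e2 ..
  qed
  have "\<exists>!s. ?P s" by (rule ex1I[of _ "\<Sum>i\<in>UNIV. sqrt (D$i$i)"], rule P0, rule uniq)
  then have "(THE s. ?P s) = (\<Sum>i\<in>UNIV. sqrt (D$i$i))" using P0 by (rule the1_equality)
  then show ?thesis unfolding nuclear_norm_def .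
qed

lemma nn_exists:
  fixes A :: "real^'n^'m"
  obtains V D where "orthogonal_matrix V" "is_diagonal D" "transpose A ** A = V ** D ** transpose V"
proof -
  have "transpose (transpose A ** A) = transpose A ** A" by (simp add: matrix_transpose_mul)
  then show ?thesis using spectral[of "transpose A ** A"] that by blast
qed

declare transpose_matrix_vector[simp del]

lemma inner_transpose:
  fixes A :: "real^'n^'m"
  shows "x \<bullet> (transpose A *v y) = (A *v x) \<bullet> y"
  by (metis dot_lmul_matrix inner_commute transpose_matrix_vector)

lemma orth_norm:
  assumes "orthogonal_matrix V"
  shows "(V *v y) \<bullet> (V *v y) = y \<bullet> (y::real^'n)"
proof -
  have "(V *v y) \<bullet> (V *v y) = y \<bullet> (transpose V *v (V *v y))" by (rule inner_transpose[symmetric])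
  also have "\<dots> = y \<bullet> y" using assms by (simp add: matrix_vector_mul_assoc orthogonal_matrix_def)
  finally show ?thesis .
qed

lemma diag_qf:
  fixes D :: "real^'n^'n"
  assumes "is_diagonal D"
  shows "y \<bullet> (D *v y) = (\<Sum>i\<in>UNIV. D$i$i * (y$i)^2)"
  using assms by (simp add: diag_mult inner_vec_def power2_eq_square algebra_simps)

lemma nn_lower:
  fixes A :: "real^'n^'m" and Z :: "real^'n^'n"
  assumes AZ: "A = A ** Z"
  shows "real (rank A) \<le> nuclear_norm Z"
proof -
  obtain V D where oV: "orthogonal_matrix V" and dD: "is_diagonal D"
    and M: "transpose Z ** Z = V ** D ** transpose V"
    using nn_exists[of Z] by blast
  have nn: "nuclear_norm Z = (\<Sum>i\<in>UNIV. sqrt (D$i$i))" by (rule nn_eq[OF oV dD M])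
  have Deq: "D = transpose V ** (transpose Z ** Z) ** V"
  proof -
    have "transpose V ** (V ** D ** transpose V) ** V = (transpose V ** V) ** D ** (transpose V ** V)"
      by (simp only: matrix_mul_assoc)
    then show ?thesis using oV by (simp add: M orthogonal_matrix_def)
  qed
  have qf: "y \<bullet> (D *v y) = (Z *v (V *v y)) \<bullet> (Z *v (V *v y))" for y
  proof -
    have "D *v y = transpose V *v (transpose Z *v (Z *v (V *v y)))"
      by (simp add: Deq matrix_vector_mul_assoc matrix_mul_assoc)
    then show ?thesis by (simp only: inner_transpose)
  qed
  have dnn: "D$i$i \<ge> 0" for i
  proof -
    have "(\<Sum>ia\<in>UNIV. D$ia$ia * (axis i 1 $ ia)^2) = (\<Sum>ia\<in>UNIV. if ia = i then D$i$i else 0)"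
      by (intro sum.cong) (auto simp: axis_def)
    then have "axis i 1 \<bullet> (D *v axis i 1) = D$i$i"
      by (simp add: diag_qf[OF dD])
    then show ?thesis using qf[of "axis i 1"] by (metis inner_ge_zero)
  qed
  define W where "W = range (\<lambda>x. transpose A *v x)"
  have subW: "subspace W" unfolding W_def
    by (rule linear_subspace_image[OF matrix_vector_mul_linear subspace_UNIV])
  have dimW: "dim W = rank A" unfolding W_def by (simp add: rank_dim_range[symmetric] rank_transpose)
  have fixW: "transpose Z *v w = w" if "w \<in> W" for w
  proof -
    obtain x where w: "w = transpose A *v x" using \<open>w \<in> W\<close> by (auto simp: W_def)
    have "transpose A = transpose Z ** transpose A"
      using AZ by (metis matrix_transpose_mul)
    then show ?thesis unfolding w by (metis matrix_vector_mul_assoc)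
  qed
  have Zbig: "w \<bullet> w \<le> (Z *v w) \<bullet> (Z *v w)" if "w \<in> W" for w
  proof -
    have "w \<bullet> w = w \<bullet> (transpose Z *v w)" using fixW[OF that] by simp
    also have "\<dots> = (Z *v w) \<bullet> w" by (simp only: inner_transpose)
    also have "\<dots> \<le> norm (Z *v w) * norm w" by (rule norm_cauchy_schwarz)
    finally have "norm w * norm w \<le> norm (Z *v w) * norm w"
      by (simp add: power2_norm_eq_inner[symmetric] power2_eq_square)
    then have "norm w \<le> norm (Z *v w)"
      by (cases "w = 0") (auto simp: mult_le_cancel_right)
    then have "norm w ^ 2 \<le> norm (Z *v w) ^ 2" by (simp add: power_mono)
    then show ?thesis by (simp add: power2_norm_eq_inner)
  qed
  define U where "U = (\<lambda>w. transpose V *v w) ` W"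
  have subU: "subspace U" unfolding U_def
    by (rule linear_subspace_image[OF matrix_vector_mul_linear subW])
  have WU: "W = (\<lambda>y. V *v y) ` U"
    using oV by (force simp: U_def image_comp o_def matrix_vector_mul_assoc orthogonal_matrix_def)
  have dimU: "dim U = rank A"
  proof (rule antisym)
    show "dim U \<le> rank A" unfolding U_def dimW[symmetric]
      by (rule dim_image_le[OF matrix_vector_mul_linear])
    show "rank A \<le> dim U" unfolding dimW[symmetric] WU
      by (rule dim_image_le[OF matrix_vector_mul_linear])
  qed
  have Ubig: "y \<bullet> y \<le> y \<bullet> (D *v y)" if "y \<in> U" for y
  proof -
    obtain w where w: "w \<in> W" "y = transpose V *v w" using \<open>y \<in> U\<close> by (auto simp: U_def)
    have Vy: "V *v y = w" using oV by (simp add: w matrix_vector_mul_assoc orthogonal_matrix_def)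
    have "y \<bullet> y = w \<bullet> w" using orth_norm[OF oV, of y] Vy by simp
    also have "\<dots> \<le> (Z *v w) \<bullet> (Z *v w)" by (rule Zbig[OF w(1)])
    also have "\<dots> = y \<bullet> (D *v y)" by (simp add: qf Vy)
    finally show ?thesis .
  qed
  define J where "J = {i. D$i$i < 1}"
  define T where "T = {x::real^'n. \<forall>i. i \<notin> J \<longrightarrow> x$i = 0}"
  have subT: "subspace T" unfolding T_def by (auto simp: subspace_def)
  have dimT: "dim T = card J"
  proof -
    have "dim T = vec.dim T" by (rule dim_vec_eq[symmetric])
    also have "\<dots> = card J" unfolding T_def by (rule dim_substandard_cart)
    finally show ?thesis .
  qed
  have UT0: "U \<inter> T \<subseteq> {0}"
  proof
    fix y assume y: "y \<in> U \<inter> T"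
    show "y \<in> {0}"
    proof (rule ccontr)
      assume "y \<notin> {0}"
      then obtain k where k: "y$k \<noteq> 0" by (auto simp: vec_eq_iff)
      then have kJ: "k \<in> J" using y by (auto simp: T_def)
      have "(\<Sum>i\<in>UNIV. D$i$i * (y$i)^2) < (\<Sum>i\<in>UNIV. (y$i)^2)"
      proof (rule sum_strict_mono_ex1)
        show "\<forall>i\<in>UNIV. D$i$i * (y$i)^2 \<le> (y$i)^2"
        proof
          fix i
          show "D$i$i * (y$i)^2 \<le> (y$i)^2"
          proof (cases "i \<in> J")
            case True
            then have "D$i$i \<le> 1" by (simp add: J_def)
            then show ?thesis using mult_right_mono[of "D$i$i" 1 "(y$i)^2"] by simp
          next
            case False then show ?thesis using y by (simp add: T_def)
          qed
        qed
        show "\<exists>i\<in>UNIV. D$i$i * (y$i)^2 < (y$i)^2"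
          using kJ k by (intro bexI[of _ k]) (auto simp: J_def)
      qed simp
      moreover have "(\<Sum>i\<in>UNIV. (y$i)^2) \<le> (\<Sum>i\<in>UNIV. D$i$i * (y$i)^2)"
      proof -
        have e: "y \<bullet> y = (\<Sum>i\<in>UNIV. (y$i)^2)" by (simp add: inner_vec_def power2_eq_square)
        have "y \<bullet> y \<le> y \<bullet> (D *v y)" using Ubig y by blast
        then show ?thesis unfolding e diag_qf[OF dD] .
      qed
      ultimately show False by simp
    qed
  qed
  then have "dim (U \<inter> T) = 0" by simp
  moreover have "dim {x + y |x y. x \<in> U \<and> y \<in> T} \<le> CARD('n)" by (rule dim_subset_UNIV_cart)
  ultimately have "rank A + card J \<le> CARD('n)"
    using dim_sums_Int[OF subU subT] dimU dimT by linarith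
  then have cJ: "real (rank A) \<le> real (card (UNIV - J))"
    by (simp add: card_Diff_subset)
  have "real (card (UNIV - J)) = (\<Sum>i\<in>UNIV. if i \<in> J then 0 else 1)"
    by (simp add: sum.If_cases Compl_eq_Diff_UNIV)
  also have "\<dots> \<le> (\<Sum>i\<in>UNIV. sqrt (D$i$i))"
  proof (rule sum_mono)
    fix i
    show "(if i \<in> J then 0 else 1) \<le> sqrt (D$i$i)"
      using dnn[of i] by (auto simp: J_def)
  qed
  finally show ?thesis using cJ nn by linarith
qed

lemma diag_prod:
  fixes X Y :: "real^'n^'n"
  assumes "is_diagonal X" "is_diagonal Y"
  shows "X ** Y = (\<chi> i j. if i = j then X$i$i * Y$i$i else 0)"
proof -
  have "(\<Sum>k\<in>UNIV. X$i$k * Y$k$j) = (if i = j then X$i$i * Y$i$i else 0)" for i j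
  proof -
    have "(\<Sum>k\<in>UNIV. X$i$k * Y$k$j) = (\<Sum>k\<in>UNIV. if k = i then (if i = j then X$i$i * Y$i$i else 0) else 0)"
      using assms by (intro sum.cong) (auto simp: is_diagonal_def)
    then show ?thesis by simp
  qed
  then show ?thesis by (simp add: matrix_matrix_mult_def vec_eq_iff)
qed

lemma conj_mul:
  assumes "orthogonal_matrix V"
  shows "(V ** X ** transpose V) ** (V ** Y ** transpose V) = V ** (X ** Y) ** transpose (V::real^'n^'n)"
proof -
  have "(V ** X ** transpose V) ** (V ** Y ** transpose V) = V ** X ** (transpose V ** V) ** Y ** transpose V"
    by (simp only: matrix_mul_assoc)
  also have "\<dots> = V ** (X ** Y) ** transpose V"
    using assms by (simp add: orthogonal_matrix_def matrix_mul_assoc)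
  finally show ?thesis .
qed

lemma conj_transpose:
  "transpose (V ** X ** transpose V) = V ** transpose X ** transpose (V::real^'n^'n)"
  by (simp add: matrix_transpose_mul matrix_mul_assoc)

lemma nn_proj:
  fixes P :: "real^'n^'n"
  assumes sP: "transpose P = P" and iP: "P ** P = P"
  shows "nuclear_norm P = real (rank P)"
proof -
  obtain V D where oV: "orthogonal_matrix V" and dD: "is_diagonal D" and PVD: "P = V ** D ** transpose V"
    using spectral[OF sP] by blast
  have "transpose P ** P = V ** D ** transpose V" using sP iP PVD by simp
  then have nn: "nuclear_norm P = (\<Sum>i\<in>UNIV. sqrt (D$i$i))" by (rule nn_eq[OF oV dD])
  have "V ** (D ** D) ** transpose V = V ** D ** transpose V"
    using iP PVD conj_mul[OF oV, of D D] by simp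
  then have "transpose V ** (V ** (D ** D) ** transpose V) ** V = transpose V ** (V ** D ** transpose V) ** V"
    by simp
  moreover have "transpose V ** (V ** X ** transpose V) ** V = X" for X :: "real^'n^'n"
  proof -
    have "transpose V ** (V ** X ** transpose V) ** V = (transpose V ** V) ** X ** (transpose V ** V)"
      by (simp only: matrix_mul_assoc)
    then show ?thesis using oV by (simp add: orthogonal_matrix_def)
  qed
  ultimately have DD: "D ** D = D" by simp
  have d01: "D$i$i = 0 \<or> D$i$i = 1" for i
  proof -
    have "(D ** D)$i$i = D$i$i * D$i$i" using diag_prod[OF dD dD] by simp
    then have "D$i$i * D$i$i = D$i$i" using DD by simp
    then show ?thesis by (metis mult_cancel_right1 mult_zero_left)
  qed
  have "(\<Sum>i\<in>UNIV. sqrt (D$i$i)) = (\<Sum>i\<in>UNIV. if D$i$i \<noteq> 0 then 1 else 0)"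
  proof (rule sum.cong[OF refl])
    fix i show "sqrt (D$i$i) = (if D$i$i \<noteq> 0 then 1 else 0)" using d01[of i] by auto
  qed
  also have "\<dots> = real (card {i. D$i$i \<noteq> 0})" by (simp add: sum.If_cases)
  also have "card {i. D$i$i \<noteq> 0} = rank D" by (rule rank_diag[OF dD, symmetric])
  also have "rank D = rank P" using rank_orth[OF oV, of D] PVD by simp
  finally show ?thesis using nn by simp
qed

lemma RtR0:
  fixes R :: "real^'n^'m"
  assumes "transpose R ** R = 0"
  shows "R = 0"
proof -
  have "R$i$j = 0" for i j
  proof -
    have "(\<Sum>k\<in>UNIV. R$k$j * R$k$j) = 0"
      using arg_cong[OF assms, of "\<lambda>M. M$j$j"] by (simp add: matrix_matrix_mult_def transpose_def)
    then have "\<forall>k\<in>UNIV. R$k$j * R$k$j = 0"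
      by (subst (asm) sum_nonneg_eq_0_iff) auto
    then show ?thesis by simp
  qed
  then show ?thesis by (simp add: vec_eq_iff)
qed

definition penrose :: "real^'n^'m \<Rightarrow> real^'m^'n \<Rightarrow> bool" where
  "penrose A B \<longleftrightarrow> A ** B ** A = A \<and> B ** A ** B = B \<and>
                    transpose (A ** B) = A ** B \<and> transpose (B ** A) = B ** A"

lemma penrose_unique:
  fixes A :: "real^'n^'m"
  assumes "penrose A B" "penrose A C"
  shows "B = C"
proof -
  have h1: "A ** B ** A = A" and h2: "B ** A ** B = B" and h3: "transpose (A ** B) = A ** B"
    and h4: "transpose (B ** A) = B ** A" using assms(1) by (auto simp: penrose_def)
  have c1: "A ** C ** A = A" and c2: "C ** A ** C = C" and c3: "transpose (A ** C) = A ** C"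
    and c4: "transpose (C ** A) = C ** A" using assms(2) by (auto simp: penrose_def)
  have "B = B ** (A ** B)" using h2 by (simp add: matrix_mul_assoc)
  also have "\<dots> = B ** (transpose B ** transpose A)" by (metis h3 matrix_transpose_mul)
  also have "\<dots> = B ** (transpose B ** transpose (A ** C ** A))" by (simp add: c1)
  also have "\<dots> = B ** (transpose B ** transpose A) ** (transpose C ** transpose A)"
    by (simp add: matrix_transpose_mul matrix_mul_assoc)
  also have "\<dots> = B ** transpose (A ** B) ** transpose (A ** C)"
    by (simp add: matrix_transpose_mul)
  also have "\<dots> = B ** A ** B ** (A ** C)" by (simp add: h3 c3 matrix_mul_assoc)
  also have "\<dots> = B ** A ** C" by (simp only: h2 matrix_mul_assoc)
  finally have eB: "B = B ** A ** C" .
  have "C = (C ** A) ** C" using c2 by simp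
  also have "\<dots> = (transpose A ** transpose C) ** C" by (metis c4 matrix_transpose_mul)
  also have "\<dots> = (transpose (A ** B ** A) ** transpose C) ** C" by (simp add: h1)
  also have "\<dots> = (transpose A ** transpose B) ** (transpose A ** transpose C) ** C"
    by (simp add: matrix_transpose_mul matrix_mul_assoc)
  also have "\<dots> = transpose (B ** A) ** transpose (C ** A) ** C"
    by (simp add: matrix_transpose_mul)
  also have "\<dots> = B ** A ** (C ** A ** C)" by (simp add: h4 c4 matrix_mul_assoc)
  also have "\<dots> = B ** A ** C" by (simp add: c2)
  finally have eC: "C = B ** A ** C" .
  show ?thesis using eB eC by simp
qed

lemma penrose_exists:
  fixes A :: "real^'n^'m"
  shows "\<exists>B. penrose A B"
proof -
  obtain V D where oV: "orthogonal_matrix V" and dD: "is_diagonal D"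
    and MD: "transpose A ** A = V ** D ** transpose V"
    using nn_exists[of A] by blast
  define cj where "cj X = V ** X ** transpose V" for X :: "real^'n^'n"
  define Dp :: "real^'n^'n" where "Dp = (\<chi> i j. if i = j then inverse (D$i$i) else 0)"
  define E :: "real^'n^'n" where "E = (\<chi> i j. if i = j then (if D$i$i = 0 then 0 else 1) else 0)"
  have dDp: "is_diagonal Dp" by (simp add: is_diagonal_def Dp_def)
  have dE: "is_diagonal E" by (simp add: is_diagonal_def E_def)
  have cjm: "cj X ** cj Y = cj (X ** Y)" for X Y unfolding cj_def by (rule conj_mul[OF oV])
  have cjt: "transpose (cj X) = cj (transpose X)" for X unfolding cj_def by (rule conj_transpose)
  have DpD: "Dp ** D = E" using diag_prod[OF dDp dD]
    by (simp add: Dp_def E_def vec_eq_iff)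
  have DE: "D ** E = D" using diag_prod[OF dD dE] dD
    by (auto simp: E_def vec_eq_iff is_diagonal_def)
  have ED: "E ** D = D" using diag_prod[OF dE dD] dD
    by (auto simp: E_def vec_eq_iff is_diagonal_def)
  have EDp: "E ** Dp = Dp" using diag_prod[OF dE dDp] dDp
    by (auto simp: E_def Dp_def vec_eq_iff is_diagonal_def)
  have tDp: "transpose Dp = Dp" by (simp add: Dp_def transpose_def vec_eq_iff)
  have tE: "transpose E = E" by (simp add: E_def transpose_def vec_eq_iff)
  define M where "M = transpose A ** A"
  have M: "M = cj D" by (simp add: M_def MD cj_def)
  define Mp where "Mp = cj Dp"
  define Q where "Q = cj E"
  define B where "B = Mp ** transpose A"
  have tMp: "transpose Mp = Mp" by (simp add: Mp_def cjt tDp)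
  have tQ: "transpose Q = Q" by (simp add: Q_def cjt tE)
  have BA: "B ** A = Q"
  proof -
    have "B ** A = Mp ** M" by (simp add: B_def M_def matrix_mul_assoc)
    also have "\<dots> = Q" by (simp add: Mp_def M Q_def cjm DpD)
    finally show ?thesis .
  qed
  have MQ: "M ** Q = M" by (simp add: M Q_def cjm DE)
  have QM: "Q ** M = M" by (simp add: M Q_def cjm ED)
  have QMp: "Q ** Mp = Mp" by (simp add: Mp_def Q_def cjm EDp)
  have AQ: "A ** Q = A"
  proof -
    define R where "R = A - A ** Q"
    have tR: "transpose R = transpose A - Q ** transpose A"
      by (simp add: R_def transpose_diff matrix_transpose_mul tQ)
    have "transpose R ** R = M - M ** Q - (Q ** M - Q ** M ** Q)"
      unfolding tR by (simp add: R_def M_def mm_diff_l mm_diff_r matrix_mul_assoc)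
    also have "\<dots> = 0" by (simp add: MQ QM)
    finally have "R = 0" by (rule RtR0)
    then show ?thesis by (simp add: R_def)
  qed
  have "penrose A B"
    unfolding penrose_def
  proof (intro conjI)
    show "A ** B ** A = A" by (simp add: matrix_mul_assoc[symmetric] BA AQ)
    show "B ** A ** B = B" by (simp add: BA) (simp add: B_def matrix_mul_assoc QMp)
    show "transpose (A ** B) = A ** B"
      by (simp add: B_def matrix_transpose_mul tMp matrix_mul_assoc)
    show "transpose (B ** A) = B ** A" by (simp add: BA tQ)
  qed
  then show ?thesis by blast
qed

lemma pinv_penrose:
  fixes A :: "real^'n^'m"
  shows "penrose A (pinv A)"
proof -
  obtain B where B: "penrose A B" using penrose_exists by blast
  have "\<exists>!B. penrose A B" using B penrose_unique by blast
  then have "penrose A (THE B. penrose A B)" by (rule theI')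
  then show ?thesis by (simp add: pinv_def penrose_def)
qed

lemma pinv_proj:
  fixes A :: "real^'n^'m"
  defines "P \<equiv> pinv A ** A"
  shows "A = A ** P" and "nuclear_norm P = real (rank A)"
proof -
  have h1: "A ** pinv A ** A = A" and h2: "pinv A ** A ** pinv A = pinv A"
    and h4: "transpose (pinv A ** A) = pinv A ** A"
    using pinv_penrose[of A] by (auto simp: penrose_def)
  show AP: "A = A ** P" unfolding P_def using h1 by (simp add: matrix_mul_assoc)
  have sP: "transpose P = P" unfolding P_def by (rule h4)
  have iP: "P ** P = P" unfolding P_def using h2 by (simp add: matrix_mul_assoc)
  have "rank P = rank A"
  proof (rule antisym)
    show "rank P \<le> rank A" unfolding P_def by (rule rank_mul_le_right)
    have "rank (A ** P) \<le> rank P" by (rule rank_mul_le_right)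
    then show "rank A \<le> rank P" using AP by simp
  qed
  then show "nuclear_norm P = real (rank A)" using nn_proj[OF sP iP] by simp
qed

theorem theorem2:
  fixes X :: "real^'n^'m" and lam :: real and f :: "real^'n^'m \<Rightarrow> real"
  assumes "lam > 0"
  shows "(\<forall>A E. rpca_opt X lam f A E \<longrightarrow> rlrr_opt X lam f (pinv A ** A) E)
       \<and> (\<forall>Z E. rlrr_opt X lam f Z E \<longrightarrow> rpca_opt X lam f (X - E) E)"
proof (intro conjI allI impI)
  fix A E assume opt: "rpca_opt X lam f A E"
  then have XAE: "X = A + E" and
    min: "\<And>A' E'. X = A' + E' \<Longrightarrow> real (rank A) + lam * f E \<le> real (rank A') + lam * f E'"
    by (auto simp: rpca_opt_def)
  have XE: "X - E = A" using XAE by simp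
  show "rlrr_opt X lam f (pinv A ** A) E"
    unfolding rlrr_opt_def
  proof (intro conjI allI impI)
    show "X - E = (X - E) ** (pinv A ** A)" using pinv_proj(1)[of A] XE by simp
    fix Z' E' assume feas: "X - E' = (X - E') ** Z'"
    have "nuclear_norm (pinv A ** A) + lam * f E = real (rank A) + lam * f E"
      using pinv_proj(2)[of A] by simp
    also have "\<dots> \<le> real (rank (X - E')) + lam * f E'" by (rule min) simp
    also have "\<dots> \<le> nuclear_norm Z' + lam * f E'" using nn_lower[OF feas] by simp
    finally show "nuclear_norm (pinv A ** A) + lam * f E \<le> nuclear_norm Z' + lam * f E'" .
  qed
next
  fix Z E assume opt: "rlrr_opt X lam f Z E"
  then have feas: "X - E = (X - E) ** Z" and
    min: "\<And>Z' E'. X - E' = (X - E') ** Z' \<Longrightarrow> nuclear_norm Z + lam * f E \<le> nuclear_norm Z' + lam * f E'"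
    by (auto simp: rlrr_opt_def)
  show "rpca_opt X lam f (X - E) E"
    unfolding rpca_opt_def
  proof (intro conjI allI impI)
    show "X = X - E + E" by simp
    fix A' E' assume XA: "X = A' + E'"
    have XE': "X - E' = A'" using XA by simp
    have "real (rank (X - E)) + lam * f E \<le> nuclear_norm Z + lam * f E"
      using nn_lower[OF feas] by simp
    also have "\<dots> \<le> nuclear_norm (pinv A' ** A') + lam * f E'"
      by (rule min) (use pinv_proj(1)[of A'] XE' in simp)
    also have "\<dots> = real (rank A') + lam * f E'" using pinv_proj(2)[of A'] by simp
    finally show "real (rank (X - E)) + lam * f E \<le> real (rank A') + lam * f E'" .
  qed
qed

end
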